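(* Let $U$ be a finite nonempty set, $R$ an equivalence relation on $U$, and $M(R)$ the support matroid induced by $R$. For every $X\subseteq U$, $X$ is not a closed set of $M(R)$ if and only if $X$ is an $R$-rough set.
   Context: For $x\in U$, $RN(x)=\{y\in U\mid xRy\}$; $R_{*}(X)=\{x\in U\mid RN(x)\subseteq X\}$ and $R^{*}(X)=\{x\in U\mid RN(x)\cap X\neq\emptyset\}$. A set $X\subseteq U$ is $R$-precise if $R^{*}(X)=R_{*}(X)$, and $R$-rough otherwise. Let $\mathbf{S}(R)=\{X\subseteq U\mid R^{*}(X)=U\}$. The support matroid $M(R)=(U,\mathbf{I}(R))$ is the matroid on $U$ whose independent sets $\mathbf{I}(R)$ are the subsets of inclusion-minimal members of $\mathbf{S}(R)$. For a matroid $(U,\mathbf{I})$, the rank is $r(X)=\max\{|I|\mid I\subseteq X, I\in\mathbf{I}\}$, the closure is $cl(X)=\{e\in U\mid r(X)=r(X\cup\{e\})\}$, and $X$ is closed if $cl(X)=X$. *)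

theory Defs
  imports Main
begin

definition RN :: "'a set \<Rightarrow> ('a \<times> 'a) set \<Rightarrow> 'a \<Rightarrow> 'a set" where
  "RN U R x = {y \<in> U. (x, y) \<in> R}"

definition lower_approx :: "'a set \<Rightarrow> ('a \<times> 'a) set \<Rightarrow> 'a set \<Rightarrow> 'a set" where
  "lower_approx U R X = {x \<in> U. RN U R x \<subseteq> X}"

definition upper_approx :: "'a set \<Rightarrow> ('a \<times> 'a) set \<Rightarrow> 'a set \<Rightarrow> 'a set" where
  "upper_approx U R X = {x \<in> U. RN U R x \<inter> X \<noteq> {}}"

definition R_precise :: "'a set \<Rightarrow> ('a \<times> 'a) set \<Rightarrow> 'a set \<Rightarrow> bool" where
  "R_precise U R X \<longleftrightarrow> upper_approx U R X = lower_approx U R X"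

definition R_rough :: "'a set \<Rightarrow> ('a \<times> 'a) set \<Rightarrow> 'a set \<Rightarrow> bool" where
  "R_rough U R X \<longleftrightarrow> \<not> R_precise U R X"

definition supports :: "'a set \<Rightarrow> ('a \<times> 'a) set \<Rightarrow> 'a set set" where
  "supports U R = {X. X \<subseteq> U \<and> upper_approx U R X = U}"

definition minimal_supports :: "'a set \<Rightarrow> ('a \<times> 'a) set \<Rightarrow> 'a set set" where
  "minimal_supports U R =
     {X \<in> supports U R. \<forall>Y \<in> supports U R. Y \<subseteq> X \<longrightarrow> Y = X}"

definition support_indep :: "'a set \<Rightarrow> ('a \<times> 'a) set \<Rightarrow> 'a set set" where
  "support_indep U R = {I. \<exists>B \<in> minimal_supports U R. I \<subseteq> B}"

definition mat_rank :: "'a set set \<Rightarrow> 'a set \<Rightarrow> nat" where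
  "mat_rank Ind X = Max {card I | I. I \<subseteq> X \<and> I \<in> Ind}"

definition mat_closure :: "'a set \<Rightarrow> 'a set set \<Rightarrow> 'a set \<Rightarrow> 'a set" where
  "mat_closure E Ind X = {e \<in> E. mat_rank Ind X = mat_rank Ind (X \<union> {e})}"

definition mat_closed :: "'a set \<Rightarrow> 'a set set \<Rightarrow> 'a set \<Rightarrow> bool" where
  "mat_closed E Ind X \<longleftrightarrow> mat_closure E Ind X = X"

end

theory Submission
  imports Defs
begin

lemma RN_eq: "equiv U R \<Longrightarrow> RN U R x = R `` {x}"
  unfolding RN_def equiv_def refl_on_def by auto

lemma cls_eq: "equiv U R \<Longrightarrow> x \<in> U \<Longrightarrow> y \<in> U \<Longrightarrow> (RN U R x = RN U R y) = ((x,y) \<in> R)"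
  by (simp add: RN_eq equiv_class_eq_iff)

lemma indep_char:
  assumes eq: "equiv U R"
  shows "support_indep U R = {I. I \<subseteq> U \<and> inj_on (RN U R) I}"
proof -
  let ?c = "RN U R"
  have refl: "\<And>x. x \<in> U \<Longrightarrow> x \<in> ?c x" using eq unfolding RN_def equiv_def refl_on_def by auto
  have sup_iff: "\<And>B. B \<in> supports U R \<longleftrightarrow> B \<subseteq> U \<and> (\<forall>x\<in>U. \<exists>b\<in>B. ?c b = ?c x)"
  proof -
    fix B
    show "B \<in> supports U R \<longleftrightarrow> B \<subseteq> U \<and> (\<forall>x\<in>U. \<exists>b\<in>B. ?c b = ?c x)"
    proof
      assume h: "B \<in> supports U R"
      hence BU: "B \<subseteq> U" by (simp add: supports_def)
      moreover have "\<forall>x\<in>U. \<exists>b\<in>B. ?c b = ?c x"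
      proof
        fix x assume x: "x \<in> U"
        with h have "x \<in> upper_approx U R B" by (simp add: supports_def)
        then obtain b where "b \<in> B" "b \<in> ?c x" by (auto simp: upper_approx_def)
        with x BU eq show "\<exists>b\<in>B. ?c b = ?c x"
          by (metis (no_types, lifting) RN_def cls_eq equiv_def mem_Collect_eq subsetD sym_def)
      qed
      ultimately show "B \<subseteq> U \<and> (\<forall>x\<in>U. \<exists>b\<in>B. ?c b = ?c x)" by blast
    next
      assume h: "B \<subseteq> U \<and> (\<forall>x\<in>U. \<exists>b\<in>B. ?c b = ?c x)"
      have "upper_approx U R B = U"
      proof (rule set_eqI, rule iffI)
        fix x assume "x \<in> upper_approx U R B" thus "x \<in> U" by (simp add: upper_approx_def)
      next
        fix x assume x: "x \<in> U"
        then obtain b where b: "b \<in> B" "?c b = ?c x" using h by blast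
        hence "b \<in> ?c x" using refl h by auto
        thus "x \<in> upper_approx U R B" using x b by (auto simp: upper_approx_def)
      qed
      thus "B \<in> supports U R" using h by (simp add: supports_def)
    qed
  qed
  have min_iff: "\<And>B. B \<in> minimal_supports U R \<longleftrightarrow> B \<in> supports U R \<and> inj_on ?c B"
  proof
    fix B assume h: "B \<in> minimal_supports U R"
    hence S: "B \<in> supports U R" by (simp add: minimal_supports_def)
    have "inj_on ?c B"
    proof (rule inj_onI, rule ccontr)
      fix b1 b2 assume b: "b1 \<in> B" "b2 \<in> B" "?c b1 = ?c b2" "b1 \<noteq> b2"
      have "B - {b1} \<in> supports U R"
        unfolding sup_iff using S b unfolding sup_iff by (metis Diff_iff Diff_subset singletonD subset_trans)
      with h have "B - {b1} = B" by (auto simp: minimal_supports_def)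
      with b show False by blast
    qed
    with S show "B \<in> supports U R \<and> inj_on ?c B" by blast
  next
    fix B assume h: "B \<in> supports U R \<and> inj_on ?c B"
    have "\<forall>Y\<in>supports U R. Y \<subseteq> B \<longrightarrow> Y = B"
    proof (intro ballI impI)
      fix Y assume Y: "Y \<in> supports U R" "Y \<subseteq> B"
      show "Y = B"
      proof (rule ccontr)
        assume "Y \<noteq> B"
        then obtain b where b: "b \<in> B" "b \<notin> Y" using Y by blast
        have "b \<in> U" using h b sup_iff by blast
        then obtain y where "y \<in> Y" "?c y = ?c b" using Y sup_iff by blast
        with h Y b show False by (metis inj_onD subsetD)
      qed
    qed
    with h show "B \<in> minimal_supports U R" by (simp add: minimal_supports_def)
  qed
  show ?thesis
  proof (rule set_eqI, rule iffI)
    fix I assume "I \<in> support_indep U R"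
    then obtain B where "B \<in> minimal_supports U R" "I \<subseteq> B" by (auto simp: support_indep_def)
    thus "I \<in> {I. I \<subseteq> U \<and> inj_on ?c I}" using min_iff sup_iff by (auto intro: inj_on_subset)
  next
    fix I assume I: "I \<in> {I. I \<subseteq> U \<and> inj_on ?c I}"
    define J where "J = {x \<in> U. \<forall>i\<in>I. ?c i \<noteq> ?c x}"
    define B where "B = I \<union> inv_into J ?c ` (?c ` J)"
    have J: "inv_into J ?c ` (?c ` J) \<subseteq> J" by (auto intro: inv_into_into)
    have injJ: "inj_on ?c (inv_into J ?c ` (?c ` J))"
      by (rule inj_onI) (metis f_inv_into_f imageE)
    have BU: "B \<subseteq> U" using I J unfolding B_def J_def by auto
    have injB: "inj_on ?c B" unfolding B_def
    proof (subst inj_on_Un, intro conjI)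
      show "inj_on ?c I" using I by simp
      show "inj_on ?c (inv_into J ?c ` (?c ` J))" by (rule injJ)
      show "?c ` (I - inv_into J ?c ` ?c ` J) \<inter> ?c ` (inv_into J ?c ` ?c ` J - I) = {}"
        using J unfolding J_def by blast
    qed
    have cov: "\<forall>x\<in>U. \<exists>b\<in>B. ?c b = ?c x"
    proof
      fix x assume x: "x \<in> U"
      show "\<exists>b\<in>B. ?c b = ?c x"
      proof (cases "\<exists>i\<in>I. ?c i = ?c x")
        case True thus ?thesis unfolding B_def by blast
      next
        case False
        hence "x \<in> J" using x unfolding J_def by blast
        hence "inv_into J ?c (?c x) \<in> B" unfolding B_def by blast
        moreover have "?c (inv_into J ?c (?c x)) = ?c x"
          by (rule f_inv_into_f) (use \<open>x \<in> J\<close> in blast)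
        ultimately show ?thesis by blast
      qed
    qed
    have "B \<in> minimal_supports U R" using min_iff sup_iff BU injB cov by blast
    moreover have "I \<subseteq> B" unfolding B_def by blast
    ultimately show "I \<in> support_indep U R" by (auto simp: support_indep_def)
  qed
qed

lemma rank_char:
  assumes eq: "equiv U R" and fin: "finite U" and A: "A \<subseteq> U"
  shows "mat_rank (support_indep U R) A = card (RN U R ` A)"
proof -
  let ?c = "RN U R"
  let ?S = "{card I | I. I \<subseteq> A \<and> I \<in> support_indep U R}"
  have finA: "finite A" using fin A finite_subset by blast
  have le: "\<And>n. n \<in> ?S \<Longrightarrow> n \<le> card (?c ` A)"
  proof -
    fix n assume "n \<in> ?S"
    then obtain I where I: "n = card I" "I \<subseteq> A" "inj_on ?c I"
      using indep_char[OF eq] by auto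
    have "card I = card (?c ` I)" using I by (simp add: card_image)
    also have "\<dots> \<le> card (?c ` A)" using I finA by (intro card_mono) auto
    finally show "n \<le> card (?c ` A)" using I by simp
  qed
  define I where "I = inv_into A ?c ` (?c ` A)"
  have IA: "I \<subseteq> A" unfolding I_def by (auto intro: inv_into_into)
  have injI: "inj_on ?c I" unfolding I_def
  proof (rule inj_onI)
    fix a b assume a: "a \<in> inv_into A ?c ` (?c ` A)" and b: "b \<in> inv_into A ?c ` (?c ` A)"
      and ab: "?c a = ?c b"
    from a obtain u where u: "u \<in> ?c ` A" "a = inv_into A ?c u" by blast
    from b obtain v where v: "v \<in> ?c ` A" "b = inv_into A ?c v" by blast
    have "?c a = u" using u f_inv_into_f by metis
    moreover have "?c b = v" using v f_inv_into_f by metis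
    ultimately show "a = b" using ab u v by simp
  qed
  have cI: "?c ` I = ?c ` A"
  proof
    show "?c ` I \<subseteq> ?c ` A" using IA by blast
    show "?c ` A \<subseteq> ?c ` I"
    proof
      fix y assume y: "y \<in> ?c ` A"
      have "y = ?c (inv_into A ?c y)" using y f_inv_into_f by metis
      moreover have "inv_into A ?c y \<in> I" unfolding I_def using y by blast
      ultimately show "y \<in> ?c ` I" by blast
    qed
  qed
  have mem: "card (?c ` A) \<in> ?S"
  proof -
    have "I \<in> support_indep U R" using indep_char[OF eq] IA A injI by auto
    moreover have "card I = card (?c ` A)" using card_image[OF injI] cI by simp
    ultimately have "card (?c ` A) = card I \<and> I \<subseteq> A \<and> I \<in> support_indep U R" using IA by simp
    thus ?thesis by (rule exI[where x=I, THEN CollectI[where P="\<lambda>n. \<exists>I. n = card I \<and> I \<subseteq> A \<and> I \<in> support_indep U R"]])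
  qed
  have finS: "finite ?S"
  proof (rule finite_subset)
    show "?S \<subseteq> card ` Pow A" by auto
    show "finite (card ` Pow A)" using finA by simp
  qed
  show ?thesis unfolding mat_rank_def
    by (rule Max_eqI[OF finS]) (use le mem in auto)
qed

theorem corollary5:
  fixes U :: "'a set" and R :: "('a \<times> 'a) set" and X :: "'a set"
  assumes "finite U" and "U \<noteq> {}" and "equiv U R" and "X \<subseteq> U"
  shows "\<not> mat_closed U (support_indep U R) X \<longleftrightarrow> R_rough U R X"
proof -
  let ?c = "RN U R"
  have eq: "equiv U R" by fact
  have refl: "\<And>x. x \<in> U \<Longrightarrow> x \<in> ?c x" using eq unfolding RN_def equiv_def refl_on_def by auto
  have finX: "finite X" using assms finite_subset by blast
  have cl: "mat_closure U (support_indep U R) X = {e \<in> U. \<exists>x\<in>X. ?c x = ?c e}"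
  proof -
    have "\<And>e. e \<in> U \<Longrightarrow> (card (?c ` X) = card (?c ` (X \<union> {e}))) = (\<exists>x\<in>X. ?c x = ?c e)"
    proof -
      fix e assume e: "e \<in> U"
      have "?c ` (X \<union> {e}) = insert (?c e) (?c ` X)" by auto
      thus "(card (?c ` X) = card (?c ` (X \<union> {e}))) = (\<exists>x\<in>X. ?c x = ?c e)"
        using finX by (auto simp: card_insert_if)
    qed
    moreover have "\<And>e. e \<in> U \<Longrightarrow> X \<union> {e} \<subseteq> U" using assms by auto
    ultimately have "\<And>e. e \<in> U \<Longrightarrow> (mat_rank (support_indep U R) X = mat_rank (support_indep U R) (X \<union> {e})) = (\<exists>x\<in>X. ?c x = ?c e)"
    proof -
      fix e assume e: "e \<in> U"
      have "mat_rank (support_indep U R) X = card (?c ` X)" using rank_char[OF eq assms(1) assms(4)] .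
      moreover have "mat_rank (support_indep U R) (X \<union> {e}) = card (?c ` (X \<union> {e}))"
        using e assms(4) by (intro rank_char[OF eq assms(1)]) auto
      ultimately show "(mat_rank (support_indep U R) X = mat_rank (support_indep U R) (X \<union> {e})) = (\<exists>x\<in>X. ?c x = ?c e)"
        using \<open>\<And>e. e \<in> U \<Longrightarrow> (card (?c ` X) = card (?c ` (X \<union> {e}))) = (\<exists>x\<in>X. ?c x = ?c e)\<close>[OF e] by simp
    qed
    thus ?thesis unfolding mat_closure_def by blast
  qed
  have up: "upper_approx U R X = {e \<in> U. \<exists>x\<in>X. ?c x = ?c e}"
  proof -
    have "\<And>e x. e \<in> U \<Longrightarrow> x \<in> X \<Longrightarrow> (x \<in> ?c e) = (?c x = ?c e)"
    proof -
      fix e x assume e: "e \<in> U" and x: "x \<in> X"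
      have xU: "x \<in> U" using x assms(4) by blast
      have "(x \<in> ?c e) = ((e,x) \<in> R)" using xU by (simp add: RN_def)
      also have "\<dots> = ((x,e) \<in> R)" using eq unfolding equiv_def sym_def by blast
      also have "\<dots> = (?c x = ?c e)" using cls_eq[OF eq xU e] by simp
      finally show "(x \<in> ?c e) = (?c x = ?c e)" .
    qed
    thus ?thesis unfolding upper_approx_def by blast
  qed
  have lowX: "lower_approx U R X \<subseteq> X" using refl unfolding lower_approx_def by blast
  have Xcl: "X \<subseteq> {e \<in> U. \<exists>x\<in>X. ?c x = ?c e}" using assms(4) by blast
  have "lower_approx U R X = X \<longleftrightarrow> upper_approx U R X = X"
  proof
    assume L: "lower_approx U R X = X"
    show "upper_approx U R X = X"
    proof (rule antisym)
      show "upper_approx U R X \<subseteq> X"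
      proof
        fix e assume "e \<in> upper_approx U R X"
        then obtain x where x: "e \<in> U" "x \<in> X" "?c x = ?c e" using up by blast
        hence "x \<in> lower_approx U R X" using L by simp
        hence "?c x \<subseteq> X" by (simp add: lower_approx_def)
        thus "e \<in> X" using x refl by auto
      qed
      show "X \<subseteq> upper_approx U R X" using up Xcl by simp
    qed
  next
    assume Up: "upper_approx U R X = X"
    show "lower_approx U R X = X"
    proof (rule antisym[OF lowX], rule subsetI)
      fix x assume x: "x \<in> X"
      have "?c x \<subseteq> X"
      proof
        fix y assume y: "y \<in> ?c x"
        have yU: "y \<in> U" using y by (simp add: RN_def)
        have "(x,y) \<in> R" using y by (simp add: RN_def)
        hence "?c x = ?c y" using cls_eq[OF eq] x yU assms(4) by blast
        hence "y \<in> upper_approx U R X" using up x yU by blast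
        thus "y \<in> X" using Up by simp
      qed
      thus "x \<in> lower_approx U R X" using x assms(4) by (auto simp: lower_approx_def)
    qed
  qed
  hence "R_precise U R X \<longleftrightarrow> upper_approx U R X = X"
    unfolding R_precise_def by (metis lowX Xcl up subset_antisym)
  thus ?thesis unfolding R_rough_def mat_closed_def cl up[symmetric] by simp
qed

end
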